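(* Let $d \ge 2$ and let $v_1,\ldots,v_m \in \mathbb{R}^d$ with $m \ge d$. Let $M$ be the minimum covering sphere of $\{v_1,\ldots,v_m\}$. Let $p_1, p_2 \in \mathbb{R}^d$ be two points lying outside $M$ (i.e. outside the closed ball bounded by $M$) such that the segment $\overline{p_1p_2}$ intersects the convex hull $\operatorname{conv}(\{v_1,\ldots,v_m\})$. Assume the point set $\{v_1,\ldots,v_m,p_1,p_2\}$ is in general position. Then there is no witness sphere of the segment $\overline{p_1p_2}$ with respect to the point set $\{v_1,\ldots,v_m,p_1,p_2\}$; that is, there is no sphere $W \subset \mathbb{R}^d$ with $p_1,p_2 \in W$ whose open interior contains none of the points $v_1,\ldots,v_m$.
   Context: The minimum covering sphere of a non-empty finite set $\{v_1,\ldots,v_m\}\subset\mathbb{R}^d$ is the smallest sphere such that every $v_i$ lies inside it or on it. A witness sphere of a segment (or, more generally, of a simplex) with respect to a finite point set $P$ is a sphere that contains all vertices of the segment on its boundary and contains no point of $P$ in its interior. A finite point set in $\mathbb{R}^d$ is in general position if for each $i=1,\ldots,d$ no $i+1$ of its points lie in an affine subspace of dimension $i-1$, and no $d+2$ of its points lie on a common sphere. *)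

theory Defs
  imports "HOL-Analysis.Analysis"
begin

definition min_covering_sphere :: "'a::euclidean_space set \<Rightarrow> 'a \<Rightarrow> real \<Rightarrow> bool" where
  "min_covering_sphere V c r \<longleftrightarrow>
     V \<subseteq> cball c r \<and> (\<forall>c' r'. V \<subseteq> cball c' r' \<longrightarrow> r \<le> r')"

definition general_position :: "'a::euclidean_space set \<Rightarrow> bool" where
  "general_position P \<longleftrightarrow>
     (\<forall>i\<in>{1..DIM('a)}. \<forall>S\<subseteq>P. card S = i + 1 \<longrightarrow>
        \<not> (\<exists>A. affine A \<and> aff_dim A = int i - 1 \<and> S \<subseteq> A)) \<and>
     (\<forall>S\<subseteq>P. card S = DIM('a) + 2 \<longrightarrow> \<not> (\<exists>c r. S \<subseteq> sphere c r))"

definition witness_sphere :: "'a::euclidean_space \<Rightarrow> 'a \<Rightarrow> 'a set \<Rightarrow> 'a \<Rightarrow> real \<Rightarrow> bool" where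
  "witness_sphere p1 p2 P c r \<longleftrightarrow>
     p1 \<in> sphere c r \<and> p2 \<in> sphere c r \<and> P \<inter> ball c r = {}"

end

theory Submission
  imports Defs
begin

lemma key_id:
  fixes x w c :: "'a::euclidean_space"
  shows "(dist w x)^2 - (dist c x)^2 = 2 * ((c - w) \<bullet> x) + (w \<bullet> w - c \<bullet> c)"
  unfolding dist_norm power2_norm_eq_inner
  by (simp add: inner_diff_left inner_diff_right inner_commute algebra_simps)

theorem mainTheorem1:
  fixes V :: "'a::euclidean_space set" and p1 p2 c :: 'a and r :: real
  assumes "DIM('a) \<ge> 2"
    and "finite V" and "card V \<ge> DIM('a)"
    and "min_covering_sphere V c r"
    and "p1 \<notin> cball c r" and "p2 \<notin> cball c r"
    and "closed_segment p1 p2 \<inter> convex hull V \<noteq> {}"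
    and "general_position (V \<union> {p1, p2})"
  shows "\<not> (\<exists>w s. witness_sphere p1 p2 (V \<union> {p1, p2}) w s)"
proof
  assume "\<exists>w s. witness_sphere p1 p2 (V \<union> {p1, p2}) w s"
  then obtain w s where ws: "p1 \<in> sphere w s" "p2 \<in> sphere w s"
    "(V \<union> {p1, p2}) \<inter> ball w s = {}" unfolding witness_sphere_def by blast
  have Vc: "V \<subseteq> cball c r" using assms(4) unfolding min_covering_sphere_def by blast
  define a where "a = 2 *\<^sub>R (c - w)"
  define t where "t = s^2 - r^2 - (w \<bullet> w - c \<bullet> c)"
  have f: "(dist w x)^2 - (dist c x)^2 = a \<bullet> x + (w \<bullet> w - c \<bullet> c)" for x
    using key_id[of w x c] unfolding a_def by simp
  have "V \<subseteq> {x. a \<bullet> x \<ge> t}"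
  proof
    fix v assume v: "v \<in> V"
    hence "dist w v \<ge> s" using ws(3) by auto
    moreover have "dist c v \<le> r" using v Vc by auto
    moreover have "0 \<le> dist c v" by simp
    ultimately have "(dist w v)^2 - (dist c v)^2 \<ge> s^2 - r^2"
    proof -
      assume h: "dist w v \<ge> s" "dist c v \<le> r" "0 \<le> dist c v"
      have "s \<ge> 0" using ws(1) by (auto simp: dist_commute) 
      hence "s^2 \<le> (dist w v)^2" using h by (simp add: power_mono)
      moreover have "(dist c v)^2 \<le> r^2" using h by (simp add: power_mono)
      ultimately show ?thesis by linarith
    qed
    thus "v \<in> {x. a \<bullet> x \<ge> t}" using f[of v] unfolding t_def by simp
  qed
  hence hullV: "convex hull V \<subseteq> {x. a \<bullet> x \<ge> t}"
    by (simp add: convex_halfspace_ge hull_minimal)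
  have pl: "a \<bullet> p < t" if p: "p \<in> sphere w s" "p \<notin> cball c r" for p
  proof -
    have "dist w p = s" using p by simp
    moreover have "dist c p > r" using p by simp
    moreover have "r \<ge> 0"
    proof -
      from assms(7) obtain q where "q \<in> convex hull V" by blast
      hence "V \<noteq> {}" by auto
      then obtain v where "v \<in> V" by blast
      thus ?thesis using Vc by (meson dist_not_less_zero mem_cball order_trans linorder_not_le less_imp_le subsetD)
    qed
    ultimately have "(dist w p)^2 - (dist c p)^2 < s^2 - r^2"
      by (simp add: power_strict_mono)
    thus ?thesis using f[of p] unfolding t_def by simp
  qed
  have "closed_segment p1 p2 \<subseteq> {x. a \<bullet> x < t}"
    using pl[OF ws(1) assms(5)] pl[OF ws(2) assms(6)]
    by (simp add: convex_halfspace_lt closed_segment_subset)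
  with hullV assms(7) show False by fastforce
qed

end
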